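(* Let $A=(a_1\ a_2\ a_3\ a_4)$ be a matrix of positive integers and $A'=(a_1\ a_2\ a_3)$, where the toric ideal of $A'$ is not a complete intersection and there exists $x\in\mathbb N\{a_1,a_2,a_3\}\cap a_4\mathbb N$ with $x\mathbb Z=\mathbb Z\{a_1,a_2,a_3\}\cap a_4\mathbb Z$. Let $M'=\{g_1'=(-c_1,v_{12},v_{13}),\,g_2'=(v_{21},-c_2,v_{23}),\,g_3'=(v_{31},v_{32},-c_3)\}$ be the minimal Markov basis of $A'$ (all $c_i,v_{ij}$ positive integers), and let $M=\{g_1=(g_1',0),g_2=(g_2',0),g_3=(g_3',0),h=(h_1,h_2,h_3,-h_4)\}$ be a minimal Markov basis of $A$ with $h_1,h_2,h_3\ge0$, $h_4>0$. If $M$ reduces the distance of the circuits of $A$, then $M'$ reduces the distance of the circuits of $A'$.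
   Context: For $z\in\mathbb Z^n$, $z^\pm\in\mathbb N^n$ are the unique vectors with disjoint supports and $z=z^+-z^-$; $\|\cdot\|$ is the $1$-norm. The toric ideal of a matrix $C$ is $I_C=\langle x^{u^+}-x^{u^-}:u\in\ker(C)\rangle$; it is a complete intersection if generated by $\dim\ker(C)$ elements. A Markov basis is a set $B\subseteq\ker(C)$ whose binomials generate $I_C$; minimal means no proper subset is one. For nonzero $z\in\ker(C)$, $u\in\ker(C)$ reduces the distance of $z$ if there exist $(p,q)\in\{(z^+,z^-),(z^-,z^+)\}$ and $\varepsilon\in\{\pm1\}$ with $p+\varepsilon u\in\mathbb N^n$ and $\|p+\varepsilon u-q\|<\|z\|$; $B$ reduces the distance of $Z$ if each nonzero $z\in Z$ has its distance reduced by some element of $B$. A circuit of $C$ is a nonzero element of $\ker(C)$ with support of size exactly two. *)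

theory Defs
  imports Main "HOL-Library.Poly_Mapping"
begin

text \<open>Integer vectors of length n are functions nat => int, the coordinates being
  0..n-1 (all other coordinates are required to be 0 where relevant).
  A 1 x n integer matrix is given by its row a :: nat => int.\<close>

definition vec :: "int list \<Rightarrow> nat \<Rightarrow> int" where
  "vec xs i = (if i < length xs then xs ! i else 0)"

definition kerC :: "(nat \<Rightarrow> int) \<Rightarrow> nat \<Rightarrow> (nat \<Rightarrow> int) set" where
  "kerC a n = {u. (\<forall>i. n \<le> i \<longrightarrow> u i = 0) \<and> (\<Sum>i<n. a i * u i) = 0}"

definition pospart :: "(nat \<Rightarrow> int) \<Rightarrow> nat \<Rightarrow> int" where
  "pospart z i = max (z i) 0"
definition negpart :: "(nat \<Rightarrow> int) \<Rightarrow> nat \<Rightarrow> int" where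
  "negpart z i = max (- z i) 0"
definition norm1 :: "nat \<Rightarrow> (nat \<Rightarrow> int) \<Rightarrow> int" where
  "norm1 n z = (\<Sum>i<n. \<bar>z i\<bar>)"
definition in_Nn :: "nat \<Rightarrow> (nat \<Rightarrow> int) \<Rightarrow> bool" where
  "in_Nn n p \<longleftrightarrow> (\<forall>i<n. 0 \<le> p i)"

type_synonym 'k mpoly = "(nat \<Rightarrow>\<^sub>0 nat) \<Rightarrow>\<^sub>0 'k"

definition expo :: "nat \<Rightarrow> (nat \<Rightarrow> int) \<Rightarrow> nat \<Rightarrow>\<^sub>0 nat" where
  "expo n p = (\<Sum>i<n. Poly_Mapping.single i (nat (p i)))"

definition monom :: "nat \<Rightarrow> (nat \<Rightarrow> int) \<Rightarrow> 'k::comm_ring_1 mpoly" where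
  "monom n p = Poly_Mapping.single (expo n p) 1"

definition binom :: "nat \<Rightarrow> (nat \<Rightarrow> int) \<Rightarrow> 'k::comm_ring_1 mpoly" where
  "binom n u = monom n (pospart u) - monom n (negpart u)"

definition ideal_gen :: "'r::comm_ring_1 set \<Rightarrow> 'r set" where
  "ideal_gen S = {(\<Sum>i<k. r i * s i) | (k::nat) r s. \<forall>i<k. s i \<in> S}"

definition toric_ideal :: "(nat \<Rightarrow> int) \<Rightarrow> nat \<Rightarrow> 'k::field mpoly set" where
  "toric_ideal a n = ideal_gen {binom n u | u. u \<in> kerC a n}"

definition ker_dim :: "(nat \<Rightarrow> int) \<Rightarrow> nat \<Rightarrow> nat" where
  "ker_dim a n = n - (if \<forall>i<n. a i = 0 then 0 else 1)"

definition complete_intersection ::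
  "'k::field itself \<Rightarrow> (nat \<Rightarrow> int) \<Rightarrow> nat \<Rightarrow> bool" where
  "complete_intersection (TYPE('k)) a n \<longleftrightarrow>
     (\<exists>gs :: 'k mpoly list. length gs = ker_dim a n \<and> ideal_gen (set gs) = toric_ideal a n)"

definition markov_basis ::
  "'k::field itself \<Rightarrow> (nat \<Rightarrow> int) \<Rightarrow> nat \<Rightarrow> (nat \<Rightarrow> int) set \<Rightarrow> bool" where
  "markov_basis (TYPE('k)) a n B \<longleftrightarrow> B \<subseteq> kerC a n \<and>
     ideal_gen ((binom n :: (nat \<Rightarrow> int) \<Rightarrow> 'k mpoly) ` B) = toric_ideal a n"

definition minimal_markov_basis ::
  "'k::field itself \<Rightarrow> (nat \<Rightarrow> int) \<Rightarrow> nat \<Rightarrow> (nat \<Rightarrow> int) set \<Rightarrow> bool" where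
  "minimal_markov_basis K a n B \<longleftrightarrow> markov_basis K a n B \<and>
     (\<forall>B'. B' \<subset> B \<longrightarrow> \<not> markov_basis K a n B')"

definition reduces_dist :: "nat \<Rightarrow> (nat \<Rightarrow> int) \<Rightarrow> (nat \<Rightarrow> int) \<Rightarrow> bool" where
  "reduces_dist n u z \<longleftrightarrow>
     (\<exists>(p, q) \<in> {(pospart z, negpart z), (negpart z, pospart z)}. \<exists>\<epsilon> \<in> {1, -1::int}.
        in_Nn n (\<lambda>i. p i + \<epsilon> * u i) \<and> norm1 n (\<lambda>i. p i + \<epsilon> * u i - q i) < norm1 n z)"

definition reduces_dist_set :: "nat \<Rightarrow> (nat \<Rightarrow> int) set \<Rightarrow> (nat \<Rightarrow> int) set \<Rightarrow> bool" where
  "reduces_dist_set n B Z \<longleftrightarrow>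
     (\<forall>z \<in> Z. (\<exists>i<n. z i \<noteq> 0) \<longrightarrow> (\<exists>u \<in> B. reduces_dist n u z))"

definition circuits :: "(nat \<Rightarrow> int) \<Rightarrow> nat \<Rightarrow> (nat \<Rightarrow> int) set" where
  "circuits a n = {z \<in> kerC a n. card {i. i < n \<and> z i \<noteq> 0} = 2}"

end

theory Submission
  imports Defs
begin
lemma lookup_expo: "l < n \<Longrightarrow> Poly_Mapping.lookup (expo n p) l = nat (p l)"
  unfolding expo_def lookup_sum lookup_single
  by (simp add: when_def)

lemma keys_binom: "Poly_Mapping.keys (binom n g :: 'k::comm_ring_1 mpoly) \<subseteq> {expo n (pospart g), expo n (negpart g)}"
  unfolding binom_def monom_def using keys_diff by fastforce

lemma markov_div:
  fixes B :: "(nat \<Rightarrow> int) set"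
  assumes mem: "(binom n z :: 'k::field mpoly) \<in> ideal_gen (binom n ` B)"
    and nz: "i < n" "z i \<noteq> 0"
    and p: "p \<in> {pospart z, negpart z}"
  shows "\<exists>g\<in>B. \<exists>s\<in>{pospart g, negpart g}. \<forall>l<n. s l \<le> p l"
proof -
  have ne: "expo n (pospart z) \<noteq> expo n (negpart z)"
  proof
    assume "expo n (pospart z) = expo n (negpart z)"
    hence "Poly_Mapping.lookup (expo n (pospart z)) i = Poly_Mapping.lookup (expo n (negpart z)) i" by simp
    thus False using nz by (simp add: lookup_expo pospart_def negpart_def)
  qed
  define m where "m = expo n p"
  have "Poly_Mapping.lookup (binom n z :: 'k mpoly) m \<noteq> 0"
    using p ne unfolding binom_def monom_def m_def
    by (auto simp: lookup_minus lookup_single)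
  moreover obtain k :: nat and r s :: "nat \<Rightarrow> 'k mpoly" where eq: "(binom n z :: 'k mpoly) = (\<Sum>i<k. r i * s i)"
    and s: "\<forall>i<k. s i \<in> binom n ` B"
    using mem unfolding ideal_gen_def by (auto simp only: mem_Collect_eq)
  ultimately have "(\<Sum>i<k. Poly_Mapping.lookup (r i * s i) m) \<noteq> 0" by (simp add: lookup_sum)
  then obtain i where i: "i < k" "Poly_Mapping.lookup (r i * s i) m \<noteq> 0"
    by (meson sum.neutral lessThan_iff)
  then obtain g where g: "g \<in> B" "s i = binom n g" using s by blast
  from i have "m \<in> Poly_Mapping.keys (r i * s i)" by (simp add: in_keys_iff)
  then obtain x y where xy: "m = x + y" "y \<in> Poly_Mapping.keys (s i)"
    using keys_mult[of "r i" "s i"] by auto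
  have "y \<in> {expo n (pospart g), expo n (negpart g)}"
    using xy(2) g(2) keys_binom[of n g, where 'k='k] by auto
  then obtain t where t: "t \<in> {pospart g, negpart g}" "y = expo n t"
    by auto
  have "\<forall>l<n. t l \<le> p l"
  proof (intro allI impI)
    fix l assume l: "l < n"
    have "Poly_Mapping.lookup m l = Poly_Mapping.lookup x l + Poly_Mapping.lookup y l" using xy by (simp add: lookup_add)
    hence "nat (t l) \<le> nat (p l)" using l t m_def by (simp add: lookup_expo)
    moreover have "0 \<le> t l" "0 \<le> p l" using t p by (auto simp: pospart_def negpart_def)
    ultimately show "t l \<le> p l" by simp
  qed
  thus ?thesis using g t by blast
qed
lemma sum3: "(\<Sum>i<(3::nat). f i) = f 0 + f 1 + f 2"
  by (simp add: numeral_3_eq_3 numeral_2_eq_2 lessThan_Suc add.commute add.left_commute)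
lemma sum4: "(\<Sum>i<(4::nat). f i) = f 0 + f 1 + f 2 + f 3"
  by (simp add: numeral_eq_Suc lessThan_Suc add.commute add.left_commute)
lemma all3: "(\<forall>i<(3::nat). P i) \<longleftrightarrow> P 0 \<and> P 1 \<and> P 2"
  by (auto simp: numeral_3_eq_3 numeral_2_eq_2 less_Suc_eq)
lemma all4: "(\<forall>i<(4::nat). P i) \<longleftrightarrow> P 0 \<and> P 1 \<and> P 2 \<and> P 3"
  by (auto simp: numeral_eq_Suc less_Suc_eq)
lemma vec3: "vec [x,y,w] 0 = x" "vec [x,y,w] (Suc 0) = y" "vec [x,y,w] 1 = y" "vec [x,y,w] 2 = w" "vec [x,y,w] 3 = 0"
  by (auto simp: vec_def)
lemma vec4: "vec [x,y,w,t] 0 = x" "vec [x,y,w,t] (Suc 0) = y" "vec [x,y,w,t] 1 = y" "vec [x,y,w,t] 2 = w" "vec [x,y,w,t] 3 = t"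
  by (auto simp: vec_def numeral_eq_Suc)

lemmas U = sum3 sum4 all3 all4 vec3 vec4 reduces_dist_def in_Nn_def norm1_def pospart_def negpart_def

lemma G1pos:
  fixes c1 v12 v13 :: int
  assumes "v12 > 0" "v13 > 0" "v12 + v13 < c1" "c1 \<le> z 0" "z 1 \<le> 0" "z 2 \<le> 0"
  shows "reduces_dist 3 (vec [-c1, v12, v13]) z"
  using assms unfolding U by auto

lemma G1neg:
  fixes c1 v12 v13 :: int
  assumes "v12 > 0" "v13 > 0" "v12 + v13 < c1" "z 0 \<le> -c1" "z 1 \<ge> 0" "z 2 \<ge> 0"
  shows "reduces_dist 3 (vec [-c1, v12, v13]) z"
  using assms unfolding U by auto


lemma G2pos:
  fixes c2 v21 v23 :: int
  assumes "v21 > 0" "v23 > 0" "v21 + v23 < c2" "c2 \<le> z 1" "z 0 \<le> 0" "z 2 \<le> 0"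
  shows "reduces_dist 3 (vec [v21, -c2, v23]) z"
  using assms unfolding U by auto
lemma G2neg:
  fixes c2 v21 v23 :: int
  assumes "v21 > 0" "v23 > 0" "v21 + v23 < c2" "z 1 \<le> -c2" "z 0 \<ge> 0" "z 2 \<ge> 0"
  shows "reduces_dist 3 (vec [v21, -c2, v23]) z"
  using assms unfolding U by auto
lemma G3pos:
  fixes c3 v31 v32 :: int
  assumes "v31 > 0" "v32 > 0" "v31 + v32 < c3" "c3 \<le> z 2" "z 0 \<le> 0" "z 1 \<le> 0"
  shows "reduces_dist 3 (vec [v31, v32, -c3]) z"
  using assms unfolding U by auto
lemma G3neg:
  fixes c3 v31 v32 :: int
  assumes "v31 > 0" "v32 > 0" "v31 + v32 < c3" "z 2 \<le> -c3" "z 0 \<ge> 0" "z 1 \<ge> 0"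
  shows "reduces_dist 3 (vec [v31, v32, -c3]) z"
  using assms unfolding U by auto

lemma lift3:
  assumes "reduces_dist 4 (vec [x, y, w, 0]) z" "z 3 = 0"
  shows "reduces_dist 3 (vec [x, y, w]) z"
  using assms unfolding U by auto

lemma vec_ge: "length xs \<le> i \<Longrightarrow> vec xs i = 0" by (simp add: vec_def)

lemma less4: "(i::nat) < 4 \<longleftrightarrow> i = 0 \<or> i = 1 \<or> i = 2 \<or> i = 3"
  by (auto simp: numeral_eq_Suc)
lemma less3: "(i::nat) < 3 \<longleftrightarrow> i = 0 \<or> i = 1 \<or> i = 2"
  by (auto simp: numeral_eq_Suc)

lemma card3:
  assumes "card {i. i < (3::nat) \<and> z i \<noteq> 0} = 2"
  shows "(z 0 = 0 \<and> z 1 \<noteq> 0 \<and> z 2 \<noteq> 0) \<or> (z 0 \<noteq> 0 \<and> z 1 = 0 \<and> z 2 \<noteq> 0) \<or> (z 0 \<noteq> 0 \<and> z 1 \<noteq> 0 \<and> z 2 = 0)"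
proof -
  have e: "{i. i < (3::nat) \<and> z i \<noteq> 0} = {i. i = 0 \<and> z 0 \<noteq> 0} \<union> {i. i = 1 \<and> z 1 \<noteq> 0} \<union> {i. i = 2 \<and> z 2 \<noteq> 0}"
    by (auto simp: less3)
  show ?thesis using assms unfolding e
    by (cases "z 0 = 0"; cases "z 1 = 0"; cases "z 2 = 0"; simp add: Collect_conv_if card_insert_if)
qed

lemma circ_w:
  fixes x y :: int
  assumes "x \<noteq> 0" "y \<noteq> 0" "j < 3" "w = (\<lambda>i. if i = j then x else if i = 3 then y else 0)"
    "(\<Sum>i<4. A i * w i) = 0"
  shows "w \<in> circuits A 4"
proof -
  have "{i. i < 4 \<and> w i \<noteq> 0} = {j, 3}" using assms by (auto simp: less4)
  moreover have "j \<noteq> 3" using assms by simp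
  ultimately show ?thesis using assms unfolding circuits_def kerC_def by auto
qed


lemma pp_vec: "pospart (vec xs) = vec (map (\<lambda>x. max x 0) xs)"
  "negpart (vec xs) = vec (map (\<lambda>x. max (-x) 0) xs)"
  by (auto simp: pospart_def negpart_def vec_def fun_eq_iff)

lemma Mlem:
  fixes c1 c2 c3 v12 v13 v21 v23 v31 v32 :: int
  assumes "\<exists>g\<in>{vec [-c1, v12, v13], vec [v21, -c2, v23], vec [v31, v32, -c3]}. \<exists>s\<in>{pospart g, negpart g}. \<forall>l<3. s l \<le> p l"
   "c1 > 0" "c2 > 0" "c3 > 0" "v12 > 0" "v13 > 0" "v21 > 0" "v23 > 0" "v31 > 0" "v32 > 0"
  shows "c1 \<le> p 0 \<or> c2 \<le> p 1 \<or> c3 \<le> p 2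
       \<or> (v12 \<le> p 1 \<and> v13 \<le> p 2) \<or> (v21 \<le> p 0 \<and> v23 \<le> p 2) \<or> (v31 \<le> p 0 \<and> v32 \<le> p 1)"
proof -
  from assms(1) obtain g s where g: "g \<in> {vec [-c1, v12, v13], vec [v21, -c2, v23], vec [v31, v32, -c3]}"
    and s: "s \<in> {pospart g, negpart g}" and le: "s 0 \<le> p 0" "s 1 \<le> p 1" "s 2 \<le> p 2"
    unfolding all3 by blast
  show ?thesis using g s le assms(2-) by (auto simp: pp_vec vec3)
qed
lemma coordp: "0 \<le> (h::int) \<Longrightarrow> h \<le> max x 0 \<Longrightarrow> \<bar>max x 0 - h - max (-x) 0\<bar> = \<bar>x\<bar> - h"
  by (auto simp: max_def abs_if)
lemma coordn: "0 \<le> (h::int) \<Longrightarrow> h \<le> max (-x) 0 \<Longrightarrow> \<bar>max (-x) 0 - h - max x 0\<bar> = \<bar>x\<bar> - h"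
  by (auto simp: max_def abs_if)

lemma Rlem:
  fixes h1 h2 h3 h4 :: int
  assumes r: "reduces_dist 4 (vec [h1, h2, h3, -h4]) z" and z3: "z 3 = 0" and h: "h4 > 0" "h1 \<ge> 0" "h2 \<ge> 0" "h3 \<ge> 0"
  shows "h4 < h1 + h2 + h3 \<and> ((h1 \<le> max (z 0) 0 \<and> h2 \<le> max (z 1) 0 \<and> h3 \<le> max (z 2) 0)
             \<or> (h1 \<le> max (- z 0) 0 \<and> h2 \<le> max (- z 1) 0 \<and> h3 \<le> max (- z 2) 0))"
proof -
  let ?h = "vec [h1, h2, h3, -h4]"
  obtain p q e where pq: "(p, q) \<in> {(pospart z, negpart z), (negpart z, pospart z)}" and e: "e \<in> {1, -1::int}"
    and nn: "in_Nn 4 (\<lambda>i. p i + e * ?h i)" and lt: "norm1 4 (\<lambda>i. p i + e * ?h i - q i) < norm1 4 z"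
    using r unfolding reduces_dist_def by blast
  have p3: "p 3 = 0" "q 3 = 0" using pq z3 by (auto simp: pospart_def negpart_def)
  have "e = -1"
  proof (rule ccontr)
    assume "e \<noteq> -1" hence "e = 1" using e by auto
    thus False using nn p3 h unfolding in_Nn_def by (auto simp: vec4 dest: spec[of _ 3])
  qed
  hence nn': "h1 \<le> p 0" "h2 \<le> p 1" "h3 \<le> p 2" using nn unfolding in_Nn_def all4 by (auto simp: vec4)
  have lt': "\<bar>p 0 - h1 - q 0\<bar> + \<bar>p 1 - h2 - q 1\<bar> + \<bar>p 2 - h3 - q 2\<bar> + h4 < \<bar>z 0\<bar> + \<bar>z 1\<bar> + \<bar>z 2\<bar>"
    using lt p3 h \<open>e = -1\<close> unfolding norm1_def sum4 by (simp add: vec4 z3)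
  from pq show ?thesis
  proof
    assume "(p, q) = (pospart z, negpart z)"
    hence pp: "p = pospart z" "q = negpart z" by auto
    have "h1 \<le> max (z 0) 0 \<and> h2 \<le> max (z 1) 0 \<and> h3 \<le> max (z 2) 0" using nn' pp by (simp add: pospart_def)
    moreover have "h4 < h1 + h2 + h3" using lt' calculation h unfolding pp pospart_def negpart_def
      by (simp add: coordp)
    ultimately show ?thesis by blast
  next
    assume "(p, q) \<in> {(negpart z, pospart z)}"
    hence pp: "p = negpart z" "q = pospart z" by auto
    have "h1 \<le> max (- z 0) 0 \<and> h2 \<le> max (- z 1) 0 \<and> h3 \<le> max (- z 2) 0" using nn' pp by (simp add: negpart_def)
    moreover have "h4 < h1 + h2 + h3" using lt' calculation h unfolding pp pospart_def negpart_def
      by (simp add: coordn)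
    ultimately show ?thesis by blast
  qed
qed


lemma W0lem:
  fixes a1 a4 c1 c2 c3 v12 v13 v21 v23 v31 v32 h1 h2 h3 h4 :: int
  assumes "\<exists>u\<in>{vec [-c1, v12, v13, 0], vec [v21, -c2, v23, 0], vec [v31, v32, -c3, 0], vec [h1, h2, h3, -h4]}. reduces_dist 4 u (vec [a4, 0, 0, -a1])"
   "a1 > 0" "a4 > 0" "c1 > 0" "c2 > 0" "c3 > 0" "v12 > 0" "v13 > 0" "v21 > 0" "v23 > 0" "v31 > 0" "v32 > 0"
   "h1 \<ge> 0" "h2 \<ge> 0" "h3 \<ge> 0" "h4 > 0"
  shows "v12 + v13 < c1 \<or> (h2 = 0 \<and> h3 = 0) \<or> h2 + h3 < h1 + h4"
  using assms unfolding reduces_dist_def in_Nn_def norm1_def all4 sum4 pp_vec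
  by (simp add: vec4) (auto simp: abs_if split: if_split_asm)
lemma W1lem:
  fixes a2 a4 c1 c2 c3 v12 v13 v21 v23 v31 v32 h1 h2 h3 h4 :: int
  assumes "\<exists>u\<in>{vec [-c1, v12, v13, 0], vec [v21, -c2, v23, 0], vec [v31, v32, -c3, 0], vec [h1, h2, h3, -h4]}. reduces_dist 4 u (vec [0, a4, 0, -a2])"
   "a2 > 0" "a4 > 0" "c1 > 0" "c2 > 0" "c3 > 0" "v12 > 0" "v13 > 0" "v21 > 0" "v23 > 0" "v31 > 0" "v32 > 0"
   "h1 \<ge> 0" "h2 \<ge> 0" "h3 \<ge> 0" "h4 > 0"
  shows "v21 + v23 < c2 \<or> (h1 = 0 \<and> h3 = 0) \<or> h1 + h3 < h2 + h4"
  using assms unfolding reduces_dist_def in_Nn_def norm1_def all4 sum4 pp_vec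
  by (simp add: vec4) (auto simp: abs_if split: if_split_asm)
lemma W2lem:
  fixes a3 a4 c1 c2 c3 v12 v13 v21 v23 v31 v32 h1 h2 h3 h4 :: int
  assumes "\<exists>u\<in>{vec [-c1, v12, v13, 0], vec [v21, -c2, v23, 0], vec [v31, v32, -c3, 0], vec [h1, h2, h3, -h4]}. reduces_dist 4 u (vec [0, 0, a4, -a3])"
   "a3 > 0" "a4 > 0" "c1 > 0" "c2 > 0" "c3 > 0" "v12 > 0" "v13 > 0" "v21 > 0" "v23 > 0" "v31 > 0" "v32 > 0"
   "h1 \<ge> 0" "h2 \<ge> 0" "h3 \<ge> 0" "h4 > 0"
  shows "v31 + v32 < c3 \<or> (h1 = 0 \<and> h2 = 0) \<or> h1 + h2 < h3 + h4"
  using assms unfolding reduces_dist_def in_Nn_def norm1_def all4 sum4 pp_vec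
  by (simp add: vec4) (auto simp: abs_if split: if_split_asm)
lemma zlem:
  fixes a1 a2 a3 :: int
  assumes zc: "z \<in> circuits (vec [a1, a2, a3]) 3"
  shows "(\<forall>i\<ge>3. z i = 0) \<and> a1 * z 0 + a2 * z 1 + a3 * z 2 = 0 \<and> card {i. i < 3 \<and> z i \<noteq> 0} = 2"
proof -
  have "(\<forall>i\<ge>3. z i = 0)" "(\<Sum>i<3. vec [a1, a2, a3] i * z i) = 0" "card {i. i < 3 \<and> z i \<noteq> 0} = 2"
    using zc unfolding circuits_def kerC_def by simp_all
  thus ?thesis unfolding sum3 vec3 by simp
qed

lemma zAlem:
  fixes a1 a2 a3 a4 :: int
  assumes z3: "\<forall>i\<ge>3. z i = 0" and ker: "a1 * z 0 + a2 * z 1 + a3 * z 2 = 0" and card: "card {i. i < 3 \<and> z i \<noteq> 0} = 2"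
  shows "z \<in> circuits (vec [a1, a2, a3, a4]) 4"
proof -
  have e: "{i. i < 4 \<and> z i \<noteq> 0} = {i. i < 3 \<and> z i \<noteq> 0}" using z3 by (auto simp: less4 less3)
  have a: "\<forall>i\<ge>4. z i = 0" using z3 by simp
  have b: "(\<Sum>i<4. vec [a1, a2, a3, a4] i * z i) = 0" unfolding sum4 vec4 using ker z3 by simp
  show ?thesis unfolding circuits_def kerC_def using a b card e by simp
qed

lemma wclem:
  fixes a1 a4 :: int
  assumes "a1 > 0" "a4 > 0"
  shows "vec [a4, 0, 0, -a1] \<in> circuits (vec [a1, a2, a3, a4]) 4"
proof -
  have e: "{i. i < 4 \<and> vec [a4, 0, 0, -a1] i \<noteq> 0} = {0,3}"
  proof (rule set_eqI)
    fix i show "i \<in> {i. i < 4 \<and> vec [a4, 0, 0, -a1] i \<noteq> 0} \<longleftrightarrow> i \<in> {0,3}"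
      unfolding mem_Collect_eq less4 using assms
      by (cases "i = 0"; cases "i = 1"; cases "i = 2"; cases "i = 3"; simp add: vec_def)
  qed
  have a: "\<forall>i\<ge>4. vec [a4, 0, 0, -a1] i = 0" by (simp add: vec_def)
  have b: "(\<Sum>i<4. vec [a1, a2, a3, a4] i * vec [a4, 0, 0, -a1] i) = 0" unfolding sum4 vec4 by simp
  have c: "card {i. i < 4 \<and> vec [a4, 0, 0, -a1] i \<noteq> 0} = 2" unfolding e by simp
  show ?thesis unfolding circuits_def kerC_def using a b c by blast
qed
lemma wclem1:
  fixes a2 a4 :: int
  assumes "a2 > 0" "a4 > 0"
  shows "vec [0, a4, 0, -a2] \<in> circuits (vec [a1, a2, a3, a4]) 4"
proof -
  have e: "{i. i < 4 \<and> vec [0, a4, 0, -a2] i \<noteq> 0} = {1,3}"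
  proof (rule set_eqI)
    fix i show "i \<in> {i. i < 4 \<and> vec [0, a4, 0, -a2] i \<noteq> 0} \<longleftrightarrow> i \<in> {1,3}"
      unfolding mem_Collect_eq less4 using assms
      by (cases "i = 0"; cases "i = 1"; cases "i = 2"; cases "i = 3"; simp add: vec_def)
  qed
  have a: "\<forall>i\<ge>4. vec [0, a4, 0, -a2] i = 0" by (simp add: vec_def)
  have b: "(\<Sum>i<4. vec [a1, a2, a3, a4] i * vec [0, a4, 0, -a2] i) = 0" unfolding sum4 vec4 by simp
  have c: "card {i. i < 4 \<and> vec [0, a4, 0, -a2] i \<noteq> 0} = 2" unfolding e by simp
  show ?thesis unfolding circuits_def kerC_def using a b c by blast
qed
lemma wclem2:
  fixes a3 a4 :: int
  assumes "a3 > 0" "a4 > 0"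
  shows "vec [0, 0, a4, -a3] \<in> circuits (vec [a1, a2, a3, a4]) 4"
proof -
  have e: "{i. i < 4 \<and> vec [0, 0, a4, -a3] i \<noteq> 0} = {2,3}"
  proof (rule set_eqI)
    fix i show "i \<in> {i. i < 4 \<and> vec [0, 0, a4, -a3] i \<noteq> 0} \<longleftrightarrow> i \<in> {2,3}"
      unfolding mem_Collect_eq less4 using assms
      by (cases "i = 0"; cases "i = 1"; cases "i = 2"; cases "i = 3"; simp add: vec_def)
  qed
  have a: "\<forall>i\<ge>4. vec [0, 0, a4, -a3] i = 0" by (simp add: vec_def)
  have b: "(\<Sum>i<4. vec [a1, a2, a3, a4] i * vec [0, 0, a4, -a3] i) = 0" unfolding sum4 vec4 by simp
  have c: "card {i. i < 4 \<and> vec [0, 0, a4, -a3] i \<noteq> 0} = 2" unfolding e by simp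
  show ?thesis unfolding circuits_def kerC_def using a b c by blast
qed

lemma Dlem:
  fixes z :: "nat \<Rightarrow> int" and c1 c2 c3 v12 v13 v21 v23 v31 v32 h1 h2 h3 h4 :: int
  assumes pos: "c1 > 0" "c2 > 0" "c3 > 0" "v12 > 0" "v13 > 0" "v21 > 0" "v23 > 0" "v31 > 0" "v32 > 0"
    "h1 \<ge> 0" "h2 \<ge> 0" "h3 \<ge> 0" "h4 > 0"
  and R: "h4 < h1 + h2 + h3 \<and> ((h1 \<le> max (z 0) 0 \<and> h2 \<le> max (z 1) 0 \<and> h3 \<le> max (z 2) 0)
             \<or> (h1 \<le> max (- z 0) 0 \<and> h2 \<le> max (- z 1) 0 \<and> h3 \<le> max (- z 2) 0))"
  and W0: "v12 + v13 < c1 \<or> (h2 = 0 \<and> h3 = 0) \<or> h2 + h3 < h1 + h4"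
  and W1: "v21 + v23 < c2 \<or> (h1 = 0 \<and> h3 = 0) \<or> h1 + h3 < h2 + h4"
  and W2: "v31 + v32 < c3 \<or> (h1 = 0 \<and> h2 = 0) \<or> h1 + h2 < h3 + h4"
  and Mp': "c1 \<le> pospart z 0 \<or> c2 \<le> pospart z 1 \<or> c3 \<le> pospart z 2
       \<or> (v12 \<le> pospart z 1 \<and> v13 \<le> pospart z 2) \<or> (v21 \<le> pospart z 0 \<and> v23 \<le> pospart z 2) \<or> (v31 \<le> pospart z 0 \<and> v32 \<le> pospart z 1)"
  and Mn': "c1 \<le> negpart z 0 \<or> c2 \<le> negpart z 1 \<or> c3 \<le> negpart z 2
       \<or> (v12 \<le> negpart z 1 \<and> v13 \<le> negpart z 2) \<or> (v21 \<le> negpart z 0 \<and> v23 \<le> negpart z 2) \<or> (v31 \<le> negpart z 0 \<and> v32 \<le> negpart z 1)"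
  and pat: "(z 0 = 0 \<and> z 1 \<noteq> 0 \<and> z 2 \<noteq> 0) \<or> (z 0 \<noteq> 0 \<and> z 1 = 0 \<and> z 2 \<noteq> 0) \<or> (z 0 \<noteq> 0 \<and> z 1 \<noteq> 0 \<and> z 2 = 0)"
  and sg1: "\<not> (z 0 \<ge> 0 \<and> z 1 \<ge> 0 \<and> z 2 \<ge> 0)"
  and sg2: "\<not> (z 0 \<le> 0 \<and> z 1 \<le> 0 \<and> z 2 \<le> 0)"
  shows "(v12 + v13 < c1 \<and> ((c1 \<le> z 0 \<and> z 1 \<le> 0 \<and> z 2 \<le> 0) \<or> (z 0 \<le> -c1 \<and> z 1 \<ge> 0 \<and> z 2 \<ge> 0)))
          \<or> (v21 + v23 < c2 \<and> ((c2 \<le> z 1 \<and> z 0 \<le> 0 \<and> z 2 \<le> 0) \<or> (z 1 \<le> -c2 \<and> z 0 \<ge> 0 \<and> z 2 \<ge> 0)))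
          \<or> (v31 + v32 < c3 \<and> ((c3 \<le> z 2 \<and> z 0 \<le> 0 \<and> z 1 \<le> 0) \<or> (z 2 \<le> -c3 \<and> z 0 \<ge> 0 \<and> z 1 \<ge> 0)))"
        proof -
          consider "z 0 > 0" "z 1 < 0" "z 2 = 0" | "z 1 > 0" "z 0 < 0" "z 2 = 0"
            | "z 0 > 0" "z 2 < 0" "z 1 = 0" | "z 2 > 0" "z 0 < 0" "z 1 = 0"
            | "z 1 > 0" "z 2 < 0" "z 0 = 0" | "z 2 > 0" "z 1 < 0" "z 0 = 0"
            using pat sg1 sg2 by (auto simp: not_le neq_iff)
          then show ?thesis
          proof cases
            case 1
            note cs = this
            have pv: "pospart z 0 = z 0" "pospart z 1 = 0" "pospart z 2 = 0" "negpart z 0 = 0" "negpart z 1 = - z 1" "negpart z 2 = 0"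
              using cs by (simp_all add: pospart_def negpart_def)
            have mi: "c1 \<le> z 0" using Mp'[unfolded pv] pos by auto
            have mj: "c2 \<le> - z 1" using Mn'[unfolded pv] pos by auto
            have hh: "h4 < h1 + h2 + h3" "(h2 = 0 \<and> h3 = 0) \<or> (h1 = 0 \<and> h3 = 0)"
              using R[unfolded pv[unfolded pospart_def negpart_def]] pos by auto
            from hh(2) show ?thesis
            proof
              assume a: "h2 = 0 \<and> h3 = 0"
              have "v21 + v23 < c2" using W1 a hh(1) pos by auto
              thus ?thesis using mj cs by simp
            next
              assume a: "h1 = 0 \<and> h3 = 0"
              have "v12 + v13 < c1" using W0 a hh(1) pos by auto
              thus ?thesis using mi cs by simp
            qed
          next
            case 2
            note cs = this
            have pv: "pospart z 1 = z 1" "pospart z 0 = 0" "pospart z 2 = 0" "negpart z 1 = 0" "negpart z 0 = - z 0" "negpart z 2 = 0"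
              using cs by (simp_all add: pospart_def negpart_def)
            have mi: "c2 \<le> z 1" using Mp'[unfolded pv] pos by auto
            have mj: "c1 \<le> - z 0" using Mn'[unfolded pv] pos by auto
            have hh: "h4 < h1 + h2 + h3" "(h1 = 0 \<and> h3 = 0) \<or> (h2 = 0 \<and> h3 = 0)"
              using R[unfolded pv[unfolded pospart_def negpart_def]] pos by auto
            from hh(2) show ?thesis
            proof
              assume a: "h1 = 0 \<and> h3 = 0"
              have "v12 + v13 < c1" using W0 a hh(1) pos by auto
              thus ?thesis using mj cs by simp
            next
              assume a: "h2 = 0 \<and> h3 = 0"
              have "v21 + v23 < c2" using W1 a hh(1) pos by auto
              thus ?thesis using mi cs by simp
            qed
          next
            case 3
            note cs = this
            have pv: "pospart z 0 = z 0" "pospart z 2 = 0" "pospart z 1 = 0" "negpart z 0 = 0" "negpart z 2 = - z 2" "negpart z 1 = 0"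
              using cs by (simp_all add: pospart_def negpart_def)
            have mi: "c1 \<le> z 0" using Mp'[unfolded pv] pos by auto
            have mj: "c3 \<le> - z 2" using Mn'[unfolded pv] pos by auto
            have hh: "h4 < h1 + h2 + h3" "(h3 = 0 \<and> h2 = 0) \<or> (h1 = 0 \<and> h2 = 0)"
              using R[unfolded pv[unfolded pospart_def negpart_def]] pos by auto
            from hh(2) show ?thesis
            proof
              assume a: "h3 = 0 \<and> h2 = 0"
              have "v31 + v32 < c3" using W2 a hh(1) pos by auto
              thus ?thesis using mj cs by simp
            next
              assume a: "h1 = 0 \<and> h2 = 0"
              have "v12 + v13 < c1" using W0 a hh(1) pos by auto
              thus ?thesis using mi cs by simp
            qed
          next
            case 4
            note cs = this
            have pv: "pospart z 2 = z 2" "pospart z 0 = 0" "pospart z 1 = 0" "negpart z 2 = 0" "negpart z 0 = - z 0" "negpart z 1 = 0"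
              using cs by (simp_all add: pospart_def negpart_def)
            have mi: "c3 \<le> z 2" using Mp'[unfolded pv] pos by auto
            have mj: "c1 \<le> - z 0" using Mn'[unfolded pv] pos by auto
            have hh: "h4 < h1 + h2 + h3" "(h1 = 0 \<and> h2 = 0) \<or> (h3 = 0 \<and> h2 = 0)"
              using R[unfolded pv[unfolded pospart_def negpart_def]] pos by auto
            from hh(2) show ?thesis
            proof
              assume a: "h1 = 0 \<and> h2 = 0"
              have "v12 + v13 < c1" using W0 a hh(1) pos by auto
              thus ?thesis using mj cs by simp
            next
              assume a: "h3 = 0 \<and> h2 = 0"
              have "v31 + v32 < c3" using W2 a hh(1) pos by auto
              thus ?thesis using mi cs by simp
            qed
          next
            case 5
            note cs = this
            have pv: "pospart z 1 = z 1" "pospart z 2 = 0" "pospart z 0 = 0" "negpart z 1 = 0" "negpart z 2 = - z 2" "negpart z 0 = 0"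
              using cs by (simp_all add: pospart_def negpart_def)
            have mi: "c2 \<le> z 1" using Mp'[unfolded pv] pos by auto
            have mj: "c3 \<le> - z 2" using Mn'[unfolded pv] pos by auto
            have hh: "h4 < h1 + h2 + h3" "(h3 = 0 \<and> h1 = 0) \<or> (h2 = 0 \<and> h1 = 0)"
              using R[unfolded pv[unfolded pospart_def negpart_def]] pos by auto
            from hh(2) show ?thesis
            proof
              assume a: "h3 = 0 \<and> h1 = 0"
              have "v31 + v32 < c3" using W2 a hh(1) pos by auto
              thus ?thesis using mj cs by simp
            next
              assume a: "h2 = 0 \<and> h1 = 0"
              have "v21 + v23 < c2" using W1 a hh(1) pos by auto
              thus ?thesis using mi cs by simp
            qed
          next
            case 6
            note cs = this
            have pv: "pospart z 2 = z 2" "pospart z 1 = 0" "pospart z 0 = 0" "negpart z 2 = 0" "negpart z 1 = - z 1" "negpart z 0 = 0"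
              using cs by (simp_all add: pospart_def negpart_def)
            have mi: "c3 \<le> z 2" using Mp'[unfolded pv] pos by auto
            have mj: "c2 \<le> - z 1" using Mn'[unfolded pv] pos by auto
            have hh: "h4 < h1 + h2 + h3" "(h2 = 0 \<and> h1 = 0) \<or> (h3 = 0 \<and> h1 = 0)"
              using R[unfolded pv[unfolded pospart_def negpart_def]] pos by auto
            from hh(2) show ?thesis
            proof
              assume a: "h2 = 0 \<and> h1 = 0"
              have "v21 + v23 < c2" using W1 a hh(1) pos by auto
              thus ?thesis using mj cs by simp
            next
              assume a: "h3 = 0 \<and> h1 = 0"
              have "v31 + v32 < c3" using W2 a hh(1) pos by auto
              thus ?thesis using mi cs by simp
            qed
          qed
        qed

theorem proposition6p7:
  fixes a1 a2 a3 a4 c1 c2 c3 v12 v13 v21 v23 v31 v32 h1 h2 h3 h4 :: int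
  assumes "a1 > 0" "a2 > 0" "a3 > 0" "a4 > 0"
    and "\<not> complete_intersection TYPE('k::field) (vec [a1, a2, a3]) 3"
    and "\<exists>x. (\<exists>l1 l2 l3 :: int. 0 \<le> l1 \<and> 0 \<le> l2 \<and> 0 \<le> l3 \<and> x = l1*a1 + l2*a2 + l3*a3)
             \<and> (\<exists>m::int. 0 \<le> m \<and> x = a4 * m)
             \<and> {x * t | t::int. True} =
               {l1*a1 + l2*a2 + l3*a3 | l1 l2 l3::int. True} \<inter> {a4 * t | t::int. True}"
    and "c1 > 0" "c2 > 0" "c3 > 0" "v12 > 0" "v13 > 0" "v21 > 0" "v23 > 0" "v31 > 0" "v32 > 0"
    and "minimal_markov_basis TYPE('k) (vec [a1, a2, a3]) 3
           {vec [-c1, v12, v13], vec [v21, -c2, v23], vec [v31, v32, -c3]}"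
    and "h1 \<ge> 0" "h2 \<ge> 0" "h3 \<ge> 0" "h4 > 0"
    and "minimal_markov_basis TYPE('k) (vec [a1, a2, a3, a4]) 4
           {vec [-c1, v12, v13, 0], vec [v21, -c2, v23, 0], vec [v31, v32, -c3, 0],
            vec [h1, h2, h3, -h4]}"
    and "reduces_dist_set 4
           {vec [-c1, v12, v13, 0], vec [v21, -c2, v23, 0], vec [v31, v32, -c3, 0],
            vec [h1, h2, h3, -h4]}
           (circuits (vec [a1, a2, a3, a4]) 4)"
  shows "reduces_dist_set 3
           {vec [-c1, v12, v13], vec [v21, -c2, v23], vec [v31, v32, -c3]}
           (circuits (vec [a1, a2, a3]) 3)"
  proof -
  let ?a = "vec [a1, a2, a3]" and ?A = "vec [a1, a2, a3, a4]"
  define B' where "B' = {vec [-c1, v12, v13], vec [v21, -c2, v23], vec [v31, v32, -c3]}"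
  define B where "B = {vec [-c1, v12, v13, 0], vec [v21, -c2, v23, 0], vec [v31, v32, -c3, 0],
            vec [h1, h2, h3, -h4]}"
  note pos = assms(1-4) assms(7-15) assms(17-20)
  have mb': "markov_basis TYPE('k) ?a 3 B'" using assms(16) unfolding B'_def minimal_markov_basis_def by blast
  have redA: "\<forall>w\<in>circuits ?A 4. (\<exists>i<4. w i \<noteq> 0) \<longrightarrow> (\<exists>u\<in>B. reduces_dist 4 u w)"
    using assms(22) unfolding B_def reduces_dist_set_def by blast
  have wc: "vec [a4, 0, 0, -a1] \<in> circuits ?A 4" "vec [0, a4, 0, -a2] \<in> circuits ?A 4" "vec [0, 0, a4, -a3] \<in> circuits ?A 4"
    using wclem[of a1 a4 a2 a3] wclem1[of a2 a4 a1 a3] wclem2[of a3 a4 a1 a2] pos by blast+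
  have wr: "\<exists>u\<in>B. reduces_dist 4 u (vec [a4, 0, 0, -a1])" "\<exists>u\<in>B. reduces_dist 4 u (vec [0, a4, 0, -a2])"
     "\<exists>u\<in>B. reduces_dist 4 u (vec [0, 0, a4, -a3])"
  proof -
    have nz: "\<exists>i<4. vec [a4, 0, 0, -a1] i \<noteq> 0" "\<exists>i<4. vec [0, a4, 0, -a2] i \<noteq> 0"
      "\<exists>i<4. vec [0, 0, a4, -a3] i \<noteq> 0"
    proof -
      have t: "(3::nat) < 4" by simp
      have "vec [a4, 0, 0, -a1] 3 \<noteq> 0" "vec [0, a4, 0, -a2] 3 \<noteq> 0" "vec [0, 0, a4, -a3] 3 \<noteq> 0"
        using pos by (simp_all add: vec4)
      thus "\<exists>i<4. vec [a4, 0, 0, -a1] i \<noteq> 0" "\<exists>i<4. vec [0, a4, 0, -a2] i \<noteq> 0"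
        "\<exists>i<4. vec [0, 0, a4, -a3] i \<noteq> 0" using t by blast+
    qed
    show "\<exists>u\<in>B. reduces_dist 4 u (vec [a4, 0, 0, -a1])" "\<exists>u\<in>B. reduces_dist 4 u (vec [0, a4, 0, -a2])"
     "\<exists>u\<in>B. reduces_dist 4 u (vec [0, 0, a4, -a3])"
      using redA wc nz by blast+
  qed
  have W0: "v12 + v13 < c1 \<or> (h2 = 0 \<and> h3 = 0) \<or> h2 + h3 < h1 + h4"
    using W0lem[OF wr(1)[unfolded B_def]] pos by blast
  have W1: "v21 + v23 < c2 \<or> (h1 = 0 \<and> h3 = 0) \<or> h1 + h3 < h2 + h4"
    using W1lem[OF wr(2)[unfolded B_def]] pos by blast
  have W2: "v31 + v32 < c3 \<or> (h1 = 0 \<and> h2 = 0) \<or> h1 + h2 < h3 + h4"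
    using W2lem[OF wr(3)[unfolded B_def]] pos by blast
  show ?thesis unfolding reduces_dist_set_def B'_def[symmetric]
  proof (intro ballI impI)
    fix z assume zc: "z \<in> circuits ?a 3" and nz: "\<exists>i<3. z i \<noteq> 0"
    have z3: "\<forall>i\<ge>3. z i = 0" and ker: "a1 * z 0 + a2 * z 1 + a3 * z 2 = 0"
      and card: "card {i. i < 3 \<and> z i \<noteq> 0} = 2"
      using zlem[OF zc] by blast+
    have pat: "(z 0 = 0 \<and> z 1 \<noteq> 0 \<and> z 2 \<noteq> 0) \<or> (z 0 \<noteq> 0 \<and> z 1 = 0 \<and> z 2 \<noteq> 0) \<or> (z 0 \<noteq> 0 \<and> z 1 \<noteq> 0 \<and> z 2 = 0)"
      using card3[OF card] .
    have sg1: "\<not> (z 0 \<ge> 0 \<and> z 1 \<ge> 0 \<and> z 2 \<ge> 0)"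
    proof
      assume h: "z 0 \<ge> 0 \<and> z 1 \<ge> 0 \<and> z 2 \<ge> 0"
      have "a1 * z 0 \<ge> 0" "a2 * z 1 \<ge> 0" "a3 * z 2 \<ge> 0" using h pos by auto
      hence "a1 * z 0 = 0" "a2 * z 1 = 0" "a3 * z 2 = 0" using ker by linarith+
      hence "z 0 = 0" "z 1 = 0" "z 2 = 0" using pos by auto
      thus False using pat by simp
    qed
    have sg2: "\<not> (z 0 \<le> 0 \<and> z 1 \<le> 0 \<and> z 2 \<le> 0)"
    proof
      assume h: "z 0 \<le> 0 \<and> z 1 \<le> 0 \<and> z 2 \<le> 0"
      have "a1 * z 0 \<le> 0" "a2 * z 1 \<le> 0" "a3 * z 2 \<le> 0" using h pos by (auto simp: mult_nonneg_nonpos)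
      hence "a1 * z 0 = 0" "a2 * z 1 = 0" "a3 * z 2 = 0" using ker by linarith+
      hence "z 0 = 0" "z 1 = 0" "z 2 = 0" using pos by auto
      thus False using pat by simp
    qed
    have zA: "z \<in> circuits ?A 4" using zAlem[OF z3 ker card] .
    obtain i where i: "i < 3" "z i \<noteq> 0" using nz by blast
    have nz4: "\<exists>i<4. z i \<noteq> 0" using i by (intro exI[of _ i]) simp
    obtain u where u: "u \<in> B" "reduces_dist 4 u z" using redA zA nz4 by blast
    have z3': "z 3 = 0" using z3 by simp
    have "(binom 3 z :: 'k mpoly) \<in> toric_ideal ?a 3"
      unfolding toric_ideal_def ideal_gen_def
      by (rule CollectI, rule exI[of _ 1], rule exI[of _ "\<lambda>_. 1"], rule exI[of _ "\<lambda>_. binom 3 z"])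
         (use zc in \<open>auto simp: circuits_def\<close>)
    hence mk: "(binom 3 z :: 'k mpoly) \<in> ideal_gen (binom 3 ` B')"
      using mb' unfolding markov_basis_def by simp
    have Mp: "\<exists>g\<in>B'. \<exists>s\<in>{pospart g, negpart g}. \<forall>l<3. s l \<le> pospart z l"
      by (rule markov_div[OF mk i]) simp
    have Mn: "\<exists>g\<in>B'. \<exists>s\<in>{pospart g, negpart g}. \<forall>l<3. s l \<le> negpart z l"
      by (rule markov_div[OF mk i]) simp
    have Mp': "c1 \<le> pospart z 0 \<or> c2 \<le> pospart z 1 \<or> c3 \<le> pospart z 2
       \<or> (v12 \<le> pospart z 1 \<and> v13 \<le> pospart z 2) \<or> (v21 \<le> pospart z 0 \<and> v23 \<le> pospart z 2) \<or> (v31 \<le> pospart z 0 \<and> v32 \<le> pospart z 1)"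
      using Mlem[OF Mp[unfolded B'_def]] pos by blast
    have Mn': "c1 \<le> negpart z 0 \<or> c2 \<le> negpart z 1 \<or> c3 \<le> negpart z 2
       \<or> (v12 \<le> negpart z 1 \<and> v13 \<le> negpart z 2) \<or> (v21 \<le> negpart z 0 \<and> v23 \<le> negpart z 2) \<or> (v31 \<le> negpart z 0 \<and> v32 \<le> negpart z 1)"
      using Mlem[OF Mn[unfolded B'_def]] pos by blast
    show "\<exists>u\<in>B'. reduces_dist 3 u z"
    proof -
      consider "u = vec [-c1, v12, v13, 0]" | "u = vec [v21, -c2, v23, 0]" | "u = vec [v31, v32, -c3, 0]"
        | "u = vec [h1, h2, h3, -h4]" using u(1) unfolding B_def by blast
      then show ?thesis
      proof cases
        case 1 thus ?thesis using lift3[OF u(2)[unfolded 1] z3'] unfolding B'_def by blast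
      next
        case 2 thus ?thesis using lift3[OF u(2)[unfolded 2] z3'] unfolding B'_def by blast
      next
        case 3 thus ?thesis using lift3[OF u(2)[unfolded 3] z3'] unfolding B'_def by blast
      next
        case 4
        have R: "h4 < h1 + h2 + h3 \<and> ((h1 \<le> max (z 0) 0 \<and> h2 \<le> max (z 1) 0 \<and> h3 \<le> max (z 2) 0)
             \<or> (h1 \<le> max (- z 0) 0 \<and> h2 \<le> max (- z 1) 0 \<and> h3 \<le> max (- z 2) 0))"
          using assms(17-20) by (intro Rlem[OF u(2)[unfolded 4] z3']) auto
        have D: "(v12 + v13 < c1 \<and> ((c1 \<le> z 0 \<and> z 1 \<le> 0 \<and> z 2 \<le> 0) \<or> (z 0 \<le> -c1 \<and> z 1 \<ge> 0 \<and> z 2 \<ge> 0)))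
          \<or> (v21 + v23 < c2 \<and> ((c2 \<le> z 1 \<and> z 0 \<le> 0 \<and> z 2 \<le> 0) \<or> (z 1 \<le> -c2 \<and> z 0 \<ge> 0 \<and> z 2 \<ge> 0)))
          \<or> (v31 + v32 < c3 \<and> ((c3 \<le> z 2 \<and> z 0 \<le> 0 \<and> z 1 \<le> 0) \<or> (z 2 \<le> -c3 \<and> z 0 \<ge> 0 \<and> z 1 \<ge> 0)))"
          by (rule Dlem[OF pos(5-17) R W0 W1 W2 Mp' Mn' pat sg1 sg2])
        from D show ?thesis
        proof (elim disjE conjE)
          assume hh: "v12 + v13 < c1" "c1 \<le> z 0" "z 1 \<le> 0" "z 2 \<le> 0"
          have "reduces_dist 3 (vec [-c1, v12, v13]) z" by (rule G1pos) (use hh pos in auto)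
          thus ?thesis unfolding B'_def by blast
        next
          assume hh: "v12 + v13 < c1" "z 0 \<le> -c1" "z 1 \<ge> 0" "z 2 \<ge> 0"
          have "reduces_dist 3 (vec [-c1, v12, v13]) z" by (rule G1neg) (use hh pos in auto)
          thus ?thesis unfolding B'_def by blast
        next
          assume hh: "v21 + v23 < c2" "c2 \<le> z 1" "z 0 \<le> 0" "z 2 \<le> 0"
          have "reduces_dist 3 (vec [v21, -c2, v23]) z" by (rule G2pos) (use hh pos in auto)
          thus ?thesis unfolding B'_def by blast
        next
          assume hh: "v21 + v23 < c2" "z 1 \<le> -c2" "z 0 \<ge> 0" "z 2 \<ge> 0"
          have "reduces_dist 3 (vec [v21, -c2, v23]) z" by (rule G2neg) (use hh pos in auto)
          thus ?thesis unfolding B'_def by blast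
        next
          assume hh: "v31 + v32 < c3" "c3 \<le> z 2" "z 0 \<le> 0" "z 1 \<le> 0"
          have "reduces_dist 3 (vec [v31, v32, -c3]) z" by (rule G3pos) (use hh pos in auto)
          thus ?thesis unfolding B'_def by blast
        next
          assume hh: "v31 + v32 < c3" "z 2 \<le> -c3" "z 0 \<ge> 0" "z 1 \<ge> 0"
          have "reduces_dist 3 (vec [v31, v32, -c3]) z" by (rule G3neg) (use hh pos in auto)
          thus ?thesis unfolding B'_def by blast
        qed
      qed
    qed
  qed
qed



end
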